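(* Let $V$ be a complex normed vector space and $x\in l^{\infty}(V)$. Then $p(x)=0$ if and only if $L(x)=0$ for every Banach limit functional $L$ on $l^\infty(V)$.
   Context: $\mathbb{N}=\{1,2,3,\dots\}$. $l^{\infty}(V)$ is the space of bounded sequences $x=\{x_n\}_{n=1}^\infty$ in $V$ with norm $\|x\|_\infty=\sup_n\|x_n\|_V$. $T$ is the left shift: $T\{x_1,x_2,x_3,\dots\}=\{x_2,x_3,\dots\}$. A Banach limit functional is a bounded (complex-)linear functional $L$ on $l^\infty(V)$ such that $\|L\|\le 1$ and $L(Tx)=L(x)$ for all $x\in l^\infty(V)$. For $x\in l^\infty(V)$, $p(x):=\lim_{n\to\infty}\left(\sup_{j\in\mathbb{N}}\frac1n\left\|\sum_{i=0}^{n-1}x_{i+j}\right\|_V\right)$ (this limit exists). *)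

theory Defs
  imports "HOL-Analysis.Analysis"
begin

text \<open>A complex normed vector space: a real normed vector space 'a together with a
complex scalar multiplication sc extending the real one and compatible with the norm.\<close>
definition complex_normed_space :: "(complex \<Rightarrow> 'a::real_normed_vector \<Rightarrow> 'a) \<Rightarrow> bool" where
  "complex_normed_space sc \<longleftrightarrow>
     (\<forall>r x. sc (complex_of_real r) x = scaleR r x) \<and>
     (\<forall>a b x. sc (a * b) x = sc a (sc b x)) \<and>
     (\<forall>a x y. sc a (x + y) = sc a x + sc a y) \<and>
     (\<forall>a b x. sc (a + b) x = sc a x + sc b x) \<and>
     (\<forall>a x. norm (sc a x) = cmod a * norm x)"

text \<open>l-infinity: bounded sequences (indexed from 0 instead of 1).\<close>
definition linf :: "(nat \<Rightarrow> 'a::real_normed_vector) set" where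
  "linf = {x. Bseq x}"

definition supnorm :: "(nat \<Rightarrow> 'a::real_normed_vector) \<Rightarrow> real" where
  "supnorm x = (SUP n. norm (x n))"

definition lshift :: "(nat \<Rightarrow> 'a) \<Rightarrow> nat \<Rightarrow> 'a" where
  "lshift x = (\<lambda>n. x (Suc n))"

definition banach_limit ::
  "(complex \<Rightarrow> 'a::real_normed_vector \<Rightarrow> 'a) \<Rightarrow> ((nat \<Rightarrow> 'a) \<Rightarrow> complex) \<Rightarrow> bool" where
  "banach_limit sc L \<longleftrightarrow>
     (\<forall>x\<in>linf. \<forall>y\<in>linf. L (\<lambda>n. x n + y n) = L x + L y) \<and>
     (\<forall>c. \<forall>x\<in>linf. L (\<lambda>n. sc c (x n)) = c * L x) \<and>
     (\<forall>x\<in>linf. cmod (L x) \<le> supnorm x) \<and>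
     (\<forall>x\<in>linf. L (lshift x) = L x)"

definition pfun :: "(nat \<Rightarrow> 'a::real_normed_vector) \<Rightarrow> real" where
  "pfun x = lim (\<lambda>n. SUP j. norm (\<Sum>i<n. x (i + j)) / real n)"

end

theory Submission
  imports Defs "HOL-Library.Function_Algebras"
begin

instantiation "fun" :: (type, real_vector) real_vector
begin
definition scaleR_fun :: "real \<Rightarrow> ('a \<Rightarrow> 'b) \<Rightarrow> 'a \<Rightarrow> 'b" where
  "scaleR_fun r f = (\<lambda>x. r *\<^sub>R f x)"
instance by standard (auto simp: scaleR_fun_def fun_eq_iff algebra_simps)
end


definition hb_good :: "'v::real_vector set \<Rightarrow> ('v \<Rightarrow> real) \<Rightarrow> 'v \<Rightarrow> ('v \<times> real) set \<Rightarrow> bool" where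
 "hb_good S p x0 G \<longleftrightarrow> fst ` G \<subseteq> S \<and> (0,0) \<in> G \<and> (x0, p x0) \<in> G \<and>
   (\<forall>x a b. (x,a)\<in>G \<longrightarrow> (x,b)\<in>G \<longrightarrow> a = b) \<and>
   (\<forall>x a y b. (x,a)\<in>G \<longrightarrow> (y,b)\<in>G \<longrightarrow> (x+y, a+b) \<in> G) \<and>
   (\<forall>x a r. (x,a)\<in>G \<longrightarrow> (r *\<^sub>R x, r*a) \<in> G) \<and>
   (\<forall>x a. (x,a)\<in>G \<longrightarrow> a \<le> p x)"

lemma hb_goodD:
  assumes "hb_good S p x0 G"
  shows "\<And>x a. (x,a)\<in>G \<Longrightarrow> x \<in> S" "(0,0) \<in> G" "(x0, p x0) \<in> G"
    "\<And>x a b. (x,a)\<in>G \<Longrightarrow> (x,b)\<in>G \<Longrightarrow> a = b"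
    "\<And>x a y b. (x,a)\<in>G \<Longrightarrow> (y,b)\<in>G \<Longrightarrow> (x+y, a+b) \<in> G"
    "\<And>x a r. (x,a)\<in>G \<Longrightarrow> (r *\<^sub>R x, r*a) \<in> G"
    "\<And>x a. (x,a)\<in>G \<Longrightarrow> a \<le> p x"
  using assms unfolding hb_good_def by (auto simp: image_subset_iff)

lemma hahn_banach_real:
  fixes S :: "'v::real_vector set" and p :: "'v \<Rightarrow> real"
  assumes S0: "0 \<in> S" and Sadd: "\<And>x y. x \<in> S \<Longrightarrow> y \<in> S \<Longrightarrow> x + y \<in> S"
    and Ssc: "\<And>x r. x \<in> S \<Longrightarrow> r *\<^sub>R x \<in> S"
    and sub: "\<And>x y. x \<in> S \<Longrightarrow> y \<in> S \<Longrightarrow> p (x + y) \<le> p x + p y"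
    and hom: "\<And>x r. x \<in> S \<Longrightarrow> r > 0 \<Longrightarrow> p (r *\<^sub>R x) = r * p x"
    and x0: "x0 \<in> S"
  shows "\<exists>f. (\<forall>x\<in>S. \<forall>y\<in>S. f (x + y) = f x + f y) \<and> (\<forall>x\<in>S. \<forall>r. f (r *\<^sub>R x) = r * f x)
            \<and> (\<forall>x\<in>S. f x \<le> p x) \<and> f x0 = p x0"
proof -
  have p0: "p 0 = 0" using hom[OF S0, of 2] by simp
  have Sdiff: "x - y \<in> S" if "x \<in> S" "y \<in> S" for x y
    using Sadd[OF that(1) Ssc[OF that(2), of "-1"]] by simp
  define A where "A = {G. hb_good S p x0 G}"
  define G0 where "G0 = {(t *\<^sub>R x0, t * p x0) | t. True}"
  have G0: "G0 \<in> A"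
    unfolding A_def mem_Collect_eq hb_good_def
  proof (intro conjI allI impI)
    show "fst ` G0 \<subseteq> S" using Ssc[OF x0] by (auto simp: G0_def)
    show "(0, 0) \<in> G0" unfolding G0_def by (rule CollectI, rule exI[of _ 0]) simp
    show "(x0, p x0) \<in> G0" unfolding G0_def by (rule CollectI, rule exI[of _ 1]) simp
  next
    fix x a b assume "(x, a) \<in> G0" "(x, b) \<in> G0"
    then obtain t s where ts: "x = t *\<^sub>R x0" "a = t * p x0" "x = s *\<^sub>R x0" "b = s * p x0"
      unfolding G0_def by blast
    show "a = b"
    proof (cases "t = s")
      case False
      then have "x0 = 0" using ts by (metis scaleR_cancel_right)
      then show ?thesis using ts p0 by simp
    qed (use ts in simp)
  next
    fix x a y b assume "(x, a) \<in> G0" "(y, b) \<in> G0"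
    then obtain t s where ts: "x = t *\<^sub>R x0" "a = t * p x0" "y = s *\<^sub>R x0" "b = s * p x0"
      unfolding G0_def by blast
    show "(x + y, a + b) \<in> G0" unfolding G0_def
      by (rule CollectI, rule exI[of _ "t+s"]) (simp add: ts algebra_simps)
  next
    fix x a r assume "(x, a) \<in> G0"
    then obtain t where ts: "x = t *\<^sub>R x0" "a = t * p x0" unfolding G0_def by blast
    show "(r *\<^sub>R x, r * a) \<in> G0" unfolding G0_def
      by (rule CollectI, rule exI[of _ "r*t"]) (simp add: ts algebra_simps)
  next
    fix x a assume "(x, a) \<in> G0"
    then obtain t where ts: "x = t *\<^sub>R x0" "a = t * p x0" unfolding G0_def by blast
    show "a \<le> p x"
    proof (cases "t > 0")
      case True then show ?thesis using hom[OF x0 True] ts by simp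
    next
      case False
      show ?thesis
      proof (cases "t = 0")
        case True then show ?thesis using ts p0 by simp
      next
        case False
        with \<open>\<not> t > 0\<close> have tn: "-t > 0" by simp
        have m: "-x0 \<in> S" using Ssc[OF x0, of "-1"] by simp
        have "0 \<le> p x0 + p (-x0)" using sub[OF x0 m] p0 by simp
        moreover have "p x = (-t) * p (-x0)" using hom[OF m tn] ts by simp
        moreover have "(-t) * (- p x0) \<le> (-t) * p (-x0)"
          using tn \<open>0 \<le> p x0 + p (-x0)\<close> by (intro mult_left_mono) auto
        ultimately show ?thesis using ts by simp
      qed
    qed
  qed
  have "\<exists>M\<in>A. \<forall>X\<in>A. M \<subseteq> X \<longrightarrow> X = M"
  proof (rule subset_Zorn_nonempty)
    show "A \<noteq> {}" using G0 by blast
  next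
    fix C assume Cne: "C \<noteq> {}" and ch: "subset.chain A C"
    have CA: "C \<subseteq> A" and tot: "\<And>X Y. X \<in> C \<Longrightarrow> Y \<in> C \<Longrightarrow> X \<subseteq> Y \<or> Y \<subseteq> X"
      using ch by (auto simp: subset_chain_def)
    have good: "\<And>X. X \<in> C \<Longrightarrow> hb_good S p x0 X" using CA by (auto simp: A_def)
    obtain X0 where X0: "X0 \<in> C" using Cne by blast
    have two: "\<exists>X\<in>C. u \<in> X \<and> v \<in> X" if uv: "u \<in> \<Union>C" "v \<in> \<Union>C" for u v
    proof -
      obtain X Y where "X \<in> C" "Y \<in> C" "u \<in> X" "v \<in> Y" using uv by blast
      then show ?thesis using tot[of X Y] by blast
    qed
    show "\<Union>C \<in> A" unfolding A_def mem_Collect_eq hb_good_def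
    proof (intro conjI allI impI)
      show "fst ` \<Union>C \<subseteq> S"
      proof
        fix x assume "x \<in> fst ` \<Union>C"
        then obtain X a where "X \<in> C" "(x,a) \<in> X" by force
        then show "x \<in> S" using hb_goodD(1)[OF good] by blast
      qed
      show "(0, 0) \<in> \<Union>C" using hb_goodD(2)[OF good[OF X0]] X0 by blast
      show "(x0, p x0) \<in> \<Union>C" using hb_goodD(3)[OF good[OF X0]] X0 by blast
    next
      fix x a b assume "(x, a) \<in> \<Union>C" "(x, b) \<in> \<Union>C"
      then obtain X where "X \<in> C" "(x,a) \<in> X" "(x,b) \<in> X" using two by blast
      then show "a = b" using hb_goodD(4)[OF good] by blast
    next
      fix x a y b assume "(x, a) \<in> \<Union>C" "(y, b) \<in> \<Union>C"
      then obtain X where "X \<in> C" "(x,a) \<in> X" "(y,b) \<in> X" using two by blast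
      then show "(x + y, a + b) \<in> \<Union>C" using hb_goodD(5)[OF good] by blast
    next
      fix x a r assume "(x, a) \<in> \<Union>C"
      then obtain X where "X \<in> C" "(x,a) \<in> X" by blast
      then show "(r *\<^sub>R x, r * a) \<in> \<Union>C" using hb_goodD(6)[OF good] by blast
    next
      fix x a assume "(x, a) \<in> \<Union>C"
      then obtain X where "X \<in> C" "(x,a) \<in> X" by blast
      then show "a \<le> p x" using hb_goodD(7)[OF good] by blast
    qed
  qed
  then obtain M where MA: "M \<in> A" and Mmax: "\<And>X. X \<in> A \<Longrightarrow> M \<subseteq> X \<Longrightarrow> X = M" by blast
  have gM: "hb_good S p x0 M" using MA by (simp add: A_def)
  note MS = hb_goodD(1)[OF gM] and M0 = hb_goodD(2)[OF gM] and Mx0 = hb_goodD(3)[OF gM]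
    and Mfun = hb_goodD(4)[OF gM] and Madd = hb_goodD(5)[OF gM] and Msc = hb_goodD(6)[OF gM]
    and Mdom = hb_goodD(7)[OF gM]
  have full: "\<exists>a. (y, a) \<in> M" if yS: "y \<in> S" for y
  proof (rule ccontr)
    assume ny: "\<nexists>a. (y, a) \<in> M"
    define B where "B = {a - p (x - y) | x a. (x, a) \<in> M}"
    define c where "c = Sup B"
    have bnd: "a - p (x - y) \<le> p (z + y) - b" if "(x,a) \<in> M" "(z,b) \<in> M" for x a z b
    proof -
      have "a + b \<le> p (x + z)" using Mdom[OF Madd[OF that]] .
      also have "x + z = (x - y) + (z + y)" by simp
      also have "p \<dots> \<le> p (x - y) + p (z + y)"
        by (rule sub[OF Sdiff[OF MS[OF that(1)] yS] Sadd[OF MS[OF that(2)] yS]])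
      finally show ?thesis by simp
    qed
    have Bne: "B \<noteq> {}" using M0 by (auto simp: B_def)
    have Bbdd: "bdd_above B" unfolding bdd_above_def B_def using bnd[OF _ M0] by auto
    have cA: "a - p (x - y) \<le> c" if "(x,a) \<in> M" for x a
      unfolding c_def by (rule cSup_upper[OF _ Bbdd]) (use that in \<open>auto simp: B_def\<close>)
    have cB: "c \<le> p (z + y) - b" if "(z,b) \<in> M" for z b
      unfolding c_def by (rule cSup_least[OF Bne]) (use bnd that in \<open>auto simp: B_def\<close>)
    define M' where "M' = {(x + t *\<^sub>R y, a + t * c) | x a t. (x, a) \<in> M}"
    have MM': "M \<subseteq> M'"
    proof
      fix u assume "u \<in> M"
      moreover obtain x a where u: "u = (x,a)" by (cases u)
      ultimately show "u \<in> M'" unfolding M'_def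
        by (intro CollectI exI[of _ x] exI[of _ a] exI[of _ 0]) simp
    qed
    have yM': "(y, c) \<in> M'" unfolding M'_def
      by (rule CollectI, rule exI[of _ 0], rule exI[of _ 0], rule exI[of _ 1]) (simp add: M0)
    have "M' \<in> A" unfolding A_def mem_Collect_eq hb_good_def
    proof (intro conjI allI impI)
      show "fst ` M' \<subseteq> S" using MS Sadd Ssc yS by (auto simp: M'_def)
      show "(0, 0) \<in> M'" using MM' M0 by blast
      show "(x0, p x0) \<in> M'" using MM' Mx0 by blast
    next
      fix x a b assume "(x, a) \<in> M'" "(x, b) \<in> M'"
      then obtain x1 a1 t1 x2 a2 t2 where e: "x = x1 + t1 *\<^sub>R y" "a = a1 + t1 * c" "(x1,a1) \<in> M"
        "x = x2 + t2 *\<^sub>R y" "b = a2 + t2 * c" "(x2,a2) \<in> M"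
        unfolding M'_def by blast
      show "a = b"
      proof (cases "t1 = t2")
        case True
        then have "x1 = x2" using e by simp
        then show ?thesis using e True Mfun by blast
      next
        case False
        have d: "(x1 + (-1) *\<^sub>R x2, a1 + (-1) * a2) \<in> M" using Madd[OF e(3) Msc[OF e(6)]] .
        have "x1 - x2 = (t2 - t1) *\<^sub>R y" using e by (simp add: algebra_simps)
        then have yeq: "y = (1 / (t2 - t1)) *\<^sub>R (x1 + (-1) *\<^sub>R x2)" using False by simp
        have "(y, (1 / (t2 - t1)) * (a1 + (-1) * a2)) \<in> M" unfolding yeq by (rule Msc[OF d])
        then show ?thesis using ny by blast
      qed
    next
      fix x a x' b assume "(x, a) \<in> M'" "(x', b) \<in> M'"
      then obtain x1 a1 t1 x2 a2 t2 where e: "x = x1 + t1 *\<^sub>R y" "a = a1 + t1 * c" "(x1,a1) \<in> M"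
        "x' = x2 + t2 *\<^sub>R y" "b = a2 + t2 * c" "(x2,a2) \<in> M"
        unfolding M'_def by blast
      show "(x + x', a + b) \<in> M'" unfolding M'_def
        by (rule CollectI, rule exI[of _ "x1+x2"], rule exI[of _ "a1+a2"], rule exI[of _ "t1+t2"])
          (simp add: e Madd algebra_simps)
    next
      fix x a r assume "(x, a) \<in> M'"
      then obtain x1 a1 t1 where e: "x = x1 + t1 *\<^sub>R y" "a = a1 + t1 * c" "(x1,a1) \<in> M"
        unfolding M'_def by blast
      have eq: "r *\<^sub>R x = r *\<^sub>R x1 + (r*t1) *\<^sub>R y" "r * a = r * a1 + (r*t1) * c"
        by (simp_all add: e algebra_simps)
      show "(r *\<^sub>R x, r * a) \<in> M'" unfolding M'_def
        using Msc[OF e(3), of r] eq by blast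
    next
      fix x a assume "(x, a) \<in> M'"
      then obtain x1 a1 t where e: "x = x1 + t *\<^sub>R y" "a = a1 + t * c" "(x1,a1) \<in> M"
        unfolding M'_def by blast
      have x1S: "x1 \<in> S" using MS[OF e(3)] .
      show "a \<le> p x"
      proof (cases "t > 0")
        case True
        have m: "((1/t) *\<^sub>R x1, (1/t) * a1) \<in> M" using Msc[OF e(3)] .
        have "c \<le> p ((1/t) *\<^sub>R x1 + y) - (1/t) * a1" using cB[OF m] .
        then have "t * c \<le> t * p ((1/t) *\<^sub>R x1 + y) - a1" using True
          by (simp add: field_simps)
        also have "t * p ((1/t) *\<^sub>R x1 + y) = p (t *\<^sub>R ((1/t) *\<^sub>R x1 + y))"
          using hom[OF Sadd[OF Ssc[OF x1S] yS] True] by simp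
        also have "t *\<^sub>R ((1/t) *\<^sub>R x1 + y) = x" using True e by (simp add: algebra_simps)
        finally show ?thesis using e by simp
      next
        case False
        show ?thesis
        proof (cases "t = 0")
          case True then show ?thesis using e Mdom by simp
        next
          case False
          define s where "s = -t"
          have s: "s > 0" using False \<open>\<not> t > 0\<close> by (simp add: s_def)
          have m: "((1/s) *\<^sub>R x1, (1/s) * a1) \<in> M" using Msc[OF e(3)] .
          have "(1/s) * a1 - p ((1/s) *\<^sub>R x1 - y) \<le> c" using cA[OF m] .
          then have "a1 - s * p ((1/s) *\<^sub>R x1 - y) \<le> s * c" using s
            by (simp add: field_simps)
          moreover have "s * p ((1/s) *\<^sub>R x1 - y) = p (s *\<^sub>R ((1/s) *\<^sub>R x1 - y))"
            using hom[OF Sdiff[OF Ssc[OF x1S] yS] s] by simp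
          moreover have "s *\<^sub>R ((1/s) *\<^sub>R x1 - y) = x" using s e by (simp add: algebra_simps s_def)
          ultimately show ?thesis using e by (simp add: s_def)
        qed
      qed
    qed
    then have "M' = M" using Mmax MM' by blast
    then show False using yM' ny by blast
  qed
  define f where "f x = (THE a. (x, a) \<in> M)" for x
  have fM: "(x, f x) \<in> M" if "x \<in> S" for x
    using full[OF that] Mfun unfolding f_def by (metis theI)
  have fE: "f x = a" if "(x, a) \<in> M" for x a
    using fM[OF MS[OF that]] that Mfun by blast
  show ?thesis
  proof (intro exI[of _ f] conjI ballI allI)
    fix x y assume "x \<in> S" "y \<in> S"
    then show "f (x + y) = f x + f y" using fE Madd fM by blast
  next
    fix x r assume "x \<in> S" then show "f (r *\<^sub>R x) = r * f x" using fE Msc fM by blast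
  next
    fix x assume "x \<in> S" then show "f x \<le> p x" using Mdom fM by blast
  next
    show "f x0 = p x0" using fE Mx0 by blast
  qed
qed



lemma fekete_aux:
  fixes b :: "nat \<Rightarrow> real"
  assumes sa: "\<And>m n. real (m+n) * b (m+n) \<le> real m * b m + real n * b n"
  shows "real (q*m + r) * b (q*m + r) \<le> real q * (real m * b m) + real r * b r"
proof (induction q)
  case 0 then show ?case by simp
next
  case (Suc q)
  have "Suc q * m + r = m + (q*m + r)" by simp
  then have "real (Suc q * m + r) * b (Suc q * m + r) = real (m + (q*m+r)) * b (m + (q*m+r))" by (simp only:)
  also have "\<dots> \<le> real m * b m + real (q*m+r) * b (q*m+r)" by (rule sa)
  also have "\<dots> \<le> real m * b m + (real q * (real m * b m) + real r * b r)" using Suc by simp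
  finally show ?case by (simp add: algebra_simps)
qed

lemma fekete:
  fixes b :: "nat \<Rightarrow> real"
  assumes nn: "\<And>n. 0 \<le> b n" and bK: "\<And>n. b n \<le> K"
    and sa: "\<And>m n. real (m+n) * b (m+n) \<le> real m * b m + real n * b n"
  shows "b \<longlonglongrightarrow> lim b" "\<And>m. m \<ge> 1 \<Longrightarrow> lim b \<le> b m"
proof -
  define I where "I = Inf (b ` {1..})"
  have bdd: "bdd_below (b ` {1..})" using nn by (auto intro!: bdd_belowI[of _ 0])
  have Ile: "I \<le> b m" if "m \<ge> 1" for m
    unfolding I_def by (rule cInf_lower) (use that bdd in auto)
  have K0: "0 \<le> K" using nn[of 0] bK[of 0] by simp
  have conv: "b \<longlonglongrightarrow> I"
  proof (rule LIMSEQ_I)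
    fix e :: real assume e: "0 < e"
    have "I < I + e/2" using e by simp
    then obtain m where m: "m \<ge> 1" "b m < I + e/2"
      unfolding I_def using cInf_lessD[of "b ` {1..}" "I + e/2"] by (auto simp: I_def)
    obtain N :: nat where N: "real m * K * 2 / e < real N" using reals_Archimedean2 by blast
    have "0 \<le> real m * K * 2 / e" using K0 e by simp
    then have Npos: "real N > 0" using N by linarith
    show "\<exists>no. \<forall>n\<ge>no. norm (b n - I) < e"
    proof (intro exI[of _ "N+1"] allI impI)
      fix n assume n: "N + 1 \<le> n"
      define q where "q = n div m"
      define r where "r = n mod m"
      have nqr: "n = q*m + r" by (simp add: q_def r_def)
      have rm: "r < m" using m by (simp add: r_def)
      have qm: "real q * real m \<le> real n" using nqr by (metis le_add1 of_nat_le_iff of_nat_mult)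
      have "real n * b n \<le> real q * (real m * b m) + real r * b r"
        using fekete_aux[OF sa, of q m r] nqr by simp
      also have "\<dots> \<le> real n * b m + real m * K"
      proof (rule add_mono)
        show "real q * (real m * b m) \<le> real n * b m"
          using qm nn[of m] by (simp add: mult.assoc[symmetric] mult_right_mono)
        show "real r * b r \<le> real m * K"
          using rm bK[of r] nn[of r] K0 by (intro mult_mono) auto
      qed
      finally have "real n * b n \<le> real n * b m + real m * K" .
      moreover have npos: "real n > 0" using n by simp
      ultimately have "b n \<le> b m + real m * K / real n"
        by (simp add: field_simps)
      also have "real m * K / real n \<le> real m * K / real N"
        using n K0 Npos by (intro divide_left_mono) (auto simp: zero_less_mult_iff)
      also have "\<dots> < e/2" using N e Npos
        by (simp add: field_simps)
      finally have "b n < I + e" using m by simp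
      moreover have "I \<le> b n" using Ile n by simp
      ultimately show "norm (b n - I) < e" by simp
    qed
  qed
  then have "lim b = I" by (rule limI)
  then show "b \<longlonglongrightarrow> lim b" "\<And>m. m \<ge> 1 \<Longrightarrow> lim b \<le> b m" using conv Ile by auto
qed



definition bseq :: "(nat \<Rightarrow> 'a::real_normed_vector) \<Rightarrow> nat \<Rightarrow> real" where
  "bseq y n = (SUP j. norm (\<Sum>i<n. y (i + j)) / real n)"

lemma pfun_bseq: "pfun y = lim (bseq y)"
  unfolding pfun_def bseq_def by simp

lemma linf_bound:
  assumes "y \<in> linf" obtains K where "K \<ge> 0" "\<And>n. norm (y n) \<le> K"
  using assms unfolding linf_def by (auto elim!: BseqE intro: less_imp_le)

lemma sum_shift_norm:
  assumes "\<And>k. norm (y k) \<le> K"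
  shows "norm (\<Sum>i<n. y (i + j)) \<le> real n * K"
proof -
  have "norm (\<Sum>i<n. y (i + j)) \<le> (\<Sum>i<n. K)" by (rule sum_norm_le) (use assms in auto)
  then show ?thesis by simp
qed

lemma bseq_term_le:
  assumes "\<And>k. norm (y k) \<le> K"
  shows "norm (\<Sum>i<n. y (i + j)) / real n \<le> K"
proof (cases "n = 0")
  case True
  have "0 \<le> K" using assms[of 0] norm_ge_zero[of "y 0"] by linarith
  then show ?thesis using True by simp
next
  case False
  then show ?thesis using sum_shift_norm[OF assms, where n=n and j=j] by (simp add: field_simps)
qed

lemma bseq_bdd:
  assumes "\<And>k. norm (y k) \<le> K"
  shows "bdd_above (range (\<lambda>j. norm (\<Sum>i<n. y (i + j)) / real n))"
  by (rule bdd_aboveI2) (rule bseq_term_le[OF assms])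

lemma bseq_upper:
  assumes "\<And>k. norm (y k) \<le> K"
  shows "norm (\<Sum>i<n. y (i + j)) / real n \<le> bseq y n"
  unfolding bseq_def by (rule cSUP_upper[OF _ bseq_bdd[OF assms]]) simp

lemma bseq_nonneg:
  assumes "\<And>k. norm (y k) \<le> K"
  shows "0 \<le> bseq y n"
  by (rule order_trans[OF _ bseq_upper[OF assms, where n=n and j=0]]) simp

lemma bseq_le:
  assumes "\<And>k. norm (y k) \<le> K"
  shows "bseq y n \<le> K"
  unfolding bseq_def
  by (rule cSUP_least) (auto intro: bseq_term_le[OF assms])

lemma bseq_upper':
  assumes "\<And>k. norm (y k) \<le> K"
  shows "norm (\<Sum>i<n. y (i + j)) \<le> real n * bseq y n"
proof (cases "n = 0")
  case False
  then show ?thesis using bseq_upper[OF assms, where n=n and j=j] by (simp add: field_simps)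
qed simp

lemma bseq_least:
  assumes "\<And>j. norm (\<Sum>i<n. y (i + j)) / real n \<le> C"
  shows "bseq y n \<le> C"
  unfolding bseq_def by (rule cSUP_least) (use assms in auto)

lemma sum_split_shift:
  fixes y :: "nat \<Rightarrow> 'a::ab_group_add"
  shows "(\<Sum>i<m+n. y (i + j)) = (\<Sum>i<m. y (i + j)) + (\<Sum>i<n. y (i + (m + j)))"
  by (induction n) (simp_all add: algebra_simps)

lemma bseq_subadd:
  assumes K: "\<And>k. norm (y k) \<le> K"
  shows "real (m+n) * bseq y (m+n) \<le> real m * bseq y m + real n * bseq y n"
proof (cases "m + n = 0")
  case True then show ?thesis by simp
next
  case False
  then have pos: "real (m+n) > 0" by (metis of_nat_0_less_iff neq0_conv)
  have "bseq y (m+n) \<le> (real m * bseq y m + real n * bseq y n) / real (m+n)"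
  proof (rule bseq_least)
    fix j
    have "norm (\<Sum>i<m+n. y (i + j)) \<le> norm (\<Sum>i<m. y (i + j)) + norm (\<Sum>i<n. y (i + (m + j)))"
      unfolding sum_split_shift by (rule norm_triangle_ineq)
    also have "\<dots> \<le> real m * bseq y m + real n * bseq y n"
      by (intro add_mono bseq_upper'[OF K])
    finally show "norm (\<Sum>i<m+n. y (i + j)) / real (m+n) \<le> (real m * bseq y m + real n * bseq y n) / real (m+n)"
      using pos by (intro divide_right_mono) auto
  qed
  then show ?thesis using pos by (simp add: field_simps)
qed

lemma pfun_props:
  assumes "y \<in> linf"
  shows "bseq y \<longlonglongrightarrow> pfun y" "\<And>m. m \<ge> 1 \<Longrightarrow> pfun y \<le> bseq y m" "0 \<le> pfun y"
proof -
  obtain K where K: "K \<ge> 0" "\<And>n. norm (y n) \<le> K" using linf_bound[OF assms] by blast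
  have f: "bseq y \<longlonglongrightarrow> lim (bseq y)" "\<And>m. m \<ge> 1 \<Longrightarrow> lim (bseq y) \<le> bseq y m"
    using fekete[of "bseq y" K] bseq_nonneg[OF K(2)] bseq_le[OF K(2)] bseq_subadd[OF K(2)] by auto
  then show "bseq y \<longlonglongrightarrow> pfun y" "\<And>m. m \<ge> 1 \<Longrightarrow> pfun y \<le> bseq y m"
    unfolding pfun_bseq by auto
  show "0 \<le> pfun y"
    by (rule LIMSEQ_le_const[OF \<open>bseq y \<longlonglongrightarrow> pfun y\<close>]) (use bseq_nonneg[OF K(2)] in auto)
qed

lemma linf_add: "y \<in> linf \<Longrightarrow> z \<in> linf \<Longrightarrow> (\<lambda>n. y n + z n) \<in> linf"
proof -
  assume "y \<in> linf" "z \<in> linf"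
  then obtain K1 K2 where "\<And>n. norm (y n) \<le> K1" "\<And>n. norm (z n) \<le> K2" using linf_bound by metis
  then have "\<And>n. norm (y n + z n) \<le> K1 + K2" by (meson add_mono norm_triangle_le)
  then show ?thesis unfolding linf_def by (auto intro: BseqI')
qed

lemma linf_scaleR: "y \<in> linf \<Longrightarrow> (\<lambda>n. r *\<^sub>R y n) \<in> linf"
proof -
  assume "y \<in> linf"
  then obtain K where "\<And>n. norm (y n) \<le> K" using linf_bound by metis
  then have "\<And>n. norm (r *\<^sub>R y n) \<le> \<bar>r\<bar> * K" by (simp add: mult_left_mono)
  then show ?thesis unfolding linf_def using BseqI'[of "\<lambda>n. r *\<^sub>R y n" "\<bar>r\<bar> * K"] by simp
qed

lemma linf_normeq: "y \<in> linf \<Longrightarrow> (\<And>n. norm (z n) \<le> C * norm (y n)) \<Longrightarrow> C \<ge> 0 \<Longrightarrow> z \<in> linf"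
proof -
  assume a: "y \<in> linf" "\<And>n. norm (z n) \<le> C * norm (y n)" "C \<ge> 0"
  then obtain K where "\<And>n. norm (y n) \<le> K" using linf_bound by metis
  then have "\<And>n. norm (z n) \<le> C * K" using a by (meson mult_left_mono order_trans)
  then show ?thesis unfolding linf_def by (auto intro: BseqI')
qed

lemma linf_shift: "y \<in> linf \<Longrightarrow> (\<lambda>n. y (n + k)) \<in> linf"
proof -
  assume "y \<in> linf"
  then obtain K where "\<And>n. norm (y n) \<le> K" using linf_bound by metis
  then show ?thesis unfolding linf_def by (auto intro: BseqI')
qed

lemma linf_lshift: "y \<in> linf \<Longrightarrow> lshift y \<in> linf"
  using linf_shift[of y 1] unfolding lshift_def by simp

lemma linf_sumshift: "y \<in> linf \<Longrightarrow> (\<lambda>j. \<Sum>i<N. y (i + j)) \<in> linf"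
proof -
  assume "y \<in> linf"
  then obtain K where "\<And>n. norm (y n) \<le> K" using linf_bound by metis
  then have "\<And>j. norm (\<Sum>i<N. y (i + j)) \<le> real N * K" by (rule sum_shift_norm)
  then show ?thesis unfolding linf_def by (auto intro: BseqI')
qed

lemma pfun_add:
  assumes y: "y \<in> linf" and z: "z \<in> linf"
  shows "pfun (\<lambda>n. y n + z n) \<le> pfun y + pfun z"
proof -
  obtain K1 K2 where K1: "\<And>n. norm (y n) \<le> K1" and K2: "\<And>n. norm (z n) \<le> K2"
    using linf_bound y z by metis
  have le: "bseq (\<lambda>n. y n + z n) n \<le> bseq y n + bseq z n" for n
  proof (rule bseq_least)
    fix j
    have "norm (\<Sum>i<n. y (i + j) + z (i + j)) \<le> norm (\<Sum>i<n. y (i + j)) + norm (\<Sum>i<n. z (i + j))"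
      unfolding sum.distrib by (rule norm_triangle_ineq)
    then have "norm (\<Sum>i<n. y (i + j) + z (i + j)) / real n \<le>
        norm (\<Sum>i<n. y (i + j)) / real n + norm (\<Sum>i<n. z (i + j)) / real n"
      by (simp add: add_divide_distrib[symmetric] divide_right_mono)
    also have "\<dots> \<le> bseq y n + bseq z n" by (intro add_mono bseq_upper[OF K1] bseq_upper[OF K2])
    finally show "norm (\<Sum>i<n. y (i + j) + z (i + j)) / real n \<le> bseq y n + bseq z n" .
  qed
  show ?thesis
    by (rule LIMSEQ_le[OF pfun_props(1)[OF linf_add[OF y z]] tendsto_add[OF pfun_props(1)[OF y] pfun_props(1)[OF z]]])
       (use le in auto)
qed

lemma pfun_scale_le:
  assumes y: "y \<in> linf"
  shows "pfun (\<lambda>n. r *\<^sub>R y n) \<le> \<bar>r\<bar> * pfun y"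
proof -
  obtain K where K: "\<And>n. norm (y n) \<le> K" using linf_bound y by metis
  have le: "bseq (\<lambda>n. r *\<^sub>R y n) n \<le> \<bar>r\<bar> * bseq y n" for n
  proof (rule bseq_least)
    fix j
    have "norm (\<Sum>i<n. r *\<^sub>R y (i + j)) / real n = \<bar>r\<bar> * (norm (\<Sum>i<n. y (i + j)) / real n)"
      by (simp add: scaleR_sum_right[symmetric])
    also have "\<dots> \<le> \<bar>r\<bar> * bseq y n" by (intro mult_left_mono bseq_upper[OF K]) auto
    finally show "norm (\<Sum>i<n. r *\<^sub>R y (i + j)) / real n \<le> \<bar>r\<bar> * bseq y n" .
  qed
  show ?thesis
    by (rule LIMSEQ_le[OF pfun_props(1)[OF linf_scaleR[OF y]] tendsto_mult_left[OF pfun_props(1)[OF y]]])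
       (use le in auto)
qed

lemma pfun_hom:
  assumes y: "y \<in> linf" and r: "r > 0"
  shows "pfun (\<lambda>n. r *\<^sub>R y n) = r * pfun y"
proof -
  have a: "pfun (\<lambda>n. r *\<^sub>R y n) \<le> r * pfun y" using pfun_scale_le[OF y, of r] r by simp
  have "pfun (\<lambda>n. (1/r) *\<^sub>R (r *\<^sub>R y n)) \<le> (1/r) * pfun (\<lambda>n. r *\<^sub>R y n)"
    using pfun_scale_le[OF linf_scaleR[OF y], of "1/r" r] r by simp
  then have "pfun y \<le> (1/r) * pfun (\<lambda>n. r *\<^sub>R y n)" using r by simp
  then have "r * pfun y \<le> pfun (\<lambda>n. r *\<^sub>R y n)" using r by (simp add: field_simps)
  with a show ?thesis by simp
qed

lemma pfun_le_supnorm: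
  assumes y: "y \<in> linf"
  shows "pfun y \<le> supnorm y"
proof -
  have "pfun y \<le> bseq y 1" using pfun_props(2)[OF y, of 1] by simp
  also have "bseq y 1 = supnorm y" unfolding bseq_def supnorm_def by simp
  finally show ?thesis .
qed

lemma pfun_telescope:
  assumes w: "w \<in> linf" and C: "\<And>n j. norm (\<Sum>i<n. w (i + j)) \<le> C"
  shows "pfun w \<le> 0"
proof -
  have le: "bseq w n \<le> C * (1 / real n)" for n
  proof (rule bseq_least)
    fix j
    show "norm (\<Sum>i<n. w (i + j)) / real n \<le> C * (1 / real n)"
      using C[where n=n and j=j] by (simp add: divide_right_mono)
  qed
  have "(\<lambda>n. C * (1 / real n)) \<longlonglongrightarrow> C * 0"
    by (intro tendsto_mult_left lim_1_over_n)
  then have "pfun w \<le> C * 0"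
    by (rule LIMSEQ_le[OF pfun_props(1)[OF w]]) (use le in auto)
  then show ?thesis by simp
qed

lemma pfun_shift_diff:
  assumes y: "y \<in> linf"
  shows "pfun (\<lambda>n. lshift y n - y n) \<le> 0" "pfun (\<lambda>n. y n - lshift y n) \<le> 0"
proof -
  obtain K where K: "\<And>n. norm (y n) \<le> K" using linf_bound y by metis
  have e1: "(\<lambda>n. lshift y n + (-1) *\<^sub>R y n) = (\<lambda>n. lshift y n - y n)" by (rule ext) simp
  have m1: "(\<lambda>n. lshift y n - y n) \<in> linf"
    using linf_add[OF linf_lshift[OF y] linf_scaleR[OF y, of "-1"]] unfolding e1 .
  have e2: "(\<lambda>n. y n + (-1) *\<^sub>R lshift y n) = (\<lambda>n. y n - lshift y n)" by (rule ext) simp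
  have m2: "(\<lambda>n. y n - lshift y n) \<in> linf"
    using linf_add[OF y linf_scaleR[OF linf_lshift[OF y], of "-1"]] unfolding e2 .
  have t: "(\<Sum>i<n. lshift y (i + j) - y (i + j)) = y (n + j) - y j" for n j
    using sum_lessThan_telescope[of "\<lambda>i. y (i + j)" n] unfolding lshift_def by simp
  have b: "norm (y (n + j) - y j) \<le> 2 * K" for n j
    using norm_triangle_ineq4[of "y (n+j)" "y j"] K[of "n+j"] K[of j] by simp
  show "pfun (\<lambda>n. lshift y n - y n) \<le> 0"
    by (rule pfun_telescope[OF m1, of "2*K"]) (unfold t, rule b)
  have t2: "(\<Sum>i<n. y (i + j) - lshift y (i + j)) = y j - y (n + j)" for n j
    using sum_lessThan_telescope'[of "\<lambda>i. y (i + j)" n] unfolding lshift_def by simp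
  have b2: "norm (y j - y (n + j)) \<le> 2 * K" for n j
    using b[of n j] by (simp only: norm_minus_commute)
  show "pfun (\<lambda>n. y n - lshift y n) \<le> 0"
    by (rule pfun_telescope[OF m2, of "2*K"]) (unfold t2, rule b2)
qed


lemma sc_props:
  assumes "complex_normed_space sc"
  shows "\<And>r v. sc (complex_of_real r) v = r *\<^sub>R v"
    "\<And>a b v. sc (a * b) v = sc a (sc b v)"
    "\<And>a v w. sc a (v + w) = sc a v + sc a w"
    "\<And>a b v. sc (a + b) v = sc a v + sc b v"
    "\<And>a v. norm (sc a v) = cmod a * norm v"
  using assms unfolding complex_normed_space_def by blast+

lemma sc_decomp:
  assumes "complex_normed_space sc"
  shows "sc c v = Re c *\<^sub>R v + Im c *\<^sub>R sc \<i> v"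
proof -
  note P = sc_props[OF assms]
  have "c = complex_of_real (Re c) + complex_of_real (Im c) * \<i>" by (simp add: complex_eq_iff)
  then have "sc c v = sc (complex_of_real (Re c) + complex_of_real (Im c) * \<i>) v" by simp
  also have "\<dots> = Re c *\<^sub>R v + Im c *\<^sub>R sc \<i> v" by (simp only: P)
  finally show ?thesis .
qed

lemma linf_zero: "(\<lambda>n. 0) \<in> linf"
  unfolding linf_def mem_Collect_eq by (rule BseqI'[of _ 0]) simp

lemma supnorm_nonneg:
  assumes "y \<in> linf" shows "0 \<le> supnorm y"
proof -
  obtain K where K: "\<And>n. norm (y n) \<le> K" using linf_bound assms by metis
  have "norm (y 0) \<le> supnorm y" unfolding supnorm_def
    by (rule cSUP_upper) (use K in \<open>auto intro!: bdd_aboveI2[where M=K]\<close>)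
  then show ?thesis using norm_ge_zero[of "y 0"] by linarith
qed

theorem mainTheorem10:
  fixes sc :: "complex \<Rightarrow> 'a::real_normed_vector \<Rightarrow> 'a"
    and x :: "nat \<Rightarrow> 'a"
  assumes "complex_normed_space sc"
    and "x \<in> linf"
  shows "pfun x = 0 \<longleftrightarrow> (\<forall>L. banach_limit sc L \<longrightarrow> L x = 0)"
proof
  note P = sc_props[OF assms(1)]
  note x = assms(2)
  assume p0: "pfun x = 0"
  show "\<forall>L. banach_limit sc L \<longrightarrow> L x = 0"
  proof (intro allI impI)
    fix L assume BL: "banach_limit sc L"
    have Ladd: "\<And>y z. y \<in> linf \<Longrightarrow> z \<in> linf \<Longrightarrow> L (\<lambda>n. y n + z n) = L y + L z"
      and Lsc: "\<And>c y. y \<in> linf \<Longrightarrow> L (\<lambda>n. sc c (y n)) = c * L y"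
      and Lnorm: "\<And>y. y \<in> linf \<Longrightarrow> cmod (L y) \<le> supnorm y"
      and Lsh: "\<And>y. y \<in> linf \<Longrightarrow> L (lshift y) = L y"
      using BL unfolding banach_limit_def by blast+
    have sh: "L (\<lambda>n. x (n + k)) = L x" for k
    proof (induction k)
      case 0 then show ?case by simp
    next
      case (Suc k)
      have "(\<lambda>n. x (n + Suc k)) = lshift (\<lambda>n. x (n + k))" by (simp add: lshift_def)
      then show ?case using Lsh[OF linf_shift[OF x, of k]] Suc by simp
    qed
    have sumL: "L (\<lambda>j. \<Sum>i<N. x (i + j)) = of_nat N * L x" for N
    proof (induction N)
      case 0
      have "(\<lambda>j. \<Sum>i<0. x (i + j)) = (\<lambda>n. sc (complex_of_real 0) (x n))"
        using P(1)[of 0] by simp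
      then show ?case using Lsc[OF x, of "complex_of_real 0"] by simp
    next
      case (Suc N)
      have "(\<lambda>j. \<Sum>i<Suc N. x (i + j)) = (\<lambda>j. (\<Sum>i<N. x (i + j)) + x (j + N))"
        by (simp add: add.commute)
      then have "L (\<lambda>j. \<Sum>i<Suc N. x (i + j)) = L (\<lambda>j. \<Sum>i<N. x (i + j)) + L (\<lambda>j. x (j + N))"
        using Ladd[OF linf_sumshift[OF x] linf_shift[OF x]] by simp
      then show ?case using Suc sh[of N] by (simp add: algebra_simps)
    qed
    obtain K where K: "\<And>k. norm (x k) \<le> K" using linf_bound x by metis
    have bnd: "cmod (L x) \<le> bseq x N" if N: "N \<ge> 1" for N
    proof -
      define s where "s = (\<lambda>j. \<Sum>i<N. x (i + j))"
      have sl: "s \<in> linf" unfolding s_def by (rule linf_sumshift[OF x])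
      have "L (\<lambda>n. sc (complex_of_real (1 / real N)) (s n)) = complex_of_real (1 / real N) * (of_nat N * L x)"
        using Lsc[OF sl] sumL[of N] by (simp add: s_def)
      also have "\<dots> = L x" using N by (simp add: field_simps)
      finally have eq: "L (\<lambda>n. sc (complex_of_real (1 / real N)) (s n)) = L x" .
      have ml: "(\<lambda>n. sc (complex_of_real (1 / real N)) (s n)) \<in> linf"
        by (rule linf_normeq[OF sl, of _ "1 / real N"]) (simp_all add: P norm_divide)
      have "supnorm (\<lambda>n. sc (complex_of_real (1 / real N)) (s n)) = bseq x N"
        unfolding supnorm_def bseq_def s_def by (simp add: P norm_divide)
      then show ?thesis using Lnorm[OF ml] eq by simp
    qed
    have "cmod (L x) \<le> pfun x"
      by (rule LIMSEQ_le_const[OF pfun_props(1)[OF x]]) (use bnd in auto)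
    then show "L x = 0" using p0 by simp
  qed
next
  note P = sc_props[OF assms(1)]
  note x = assms(2)
  assume H: "\<forall>L. banach_limit sc L \<longrightarrow> L x = 0"
  show "pfun x = 0"
  proof (rule ccontr)
    assume ne: "pfun x \<noteq> 0"
    have plus_eq: "y + z = (\<lambda>n. y n + z n)" for y z :: "nat \<Rightarrow> 'a" by (simp add: plus_fun_def)
    have sc_eq: "r *\<^sub>R y = (\<lambda>n. r *\<^sub>R y n)" for r and y :: "nat \<Rightarrow> 'a" by (simp add: scaleR_fun_def)
    have zero_eq: "(0 :: nat \<Rightarrow> 'a) = (\<lambda>n. 0)" by (simp add: zero_fun_def)
    obtain f where f1: "\<forall>y\<in>linf. \<forall>z\<in>linf. f (y + z) = f y + f z"
      and f2: "\<forall>y\<in>linf. \<forall>r. f (r *\<^sub>R y) = r * f y"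
      and f3: "\<forall>y\<in>linf. f y \<le> pfun y" and f4: "f x = pfun x"
    proof -
      have "\<exists>f. (\<forall>y\<in>linf. \<forall>z\<in>linf. f (y + z) = f y + f z) \<and> (\<forall>y\<in>linf. \<forall>r. f (r *\<^sub>R y) = r * f y)
            \<and> (\<forall>y\<in>linf. f y \<le> pfun y) \<and> f x = pfun x"
      proof (rule hahn_banach_real)
        show "(0 :: nat \<Rightarrow> 'a) \<in> linf" using linf_zero by (simp add: zero_eq)
        show "y + z \<in> linf" if "y \<in> linf" "z \<in> linf" for y z :: "nat \<Rightarrow> 'a"
          unfolding plus_eq by (rule linf_add[OF that])
        show "r *\<^sub>R y \<in> linf" if "y \<in> linf" for y :: "nat \<Rightarrow> 'a" and r
          unfolding sc_eq by (rule linf_scaleR[OF that])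
        show "pfun (y + z) \<le> pfun y + pfun z" if "y \<in> linf" "z \<in> linf" for y z :: "nat \<Rightarrow> 'a"
          unfolding plus_eq by (rule pfun_add[OF that])
        show "pfun (r *\<^sub>R y) = r * pfun y" if "y \<in> linf" "r > 0" for y :: "nat \<Rightarrow> 'a" and r
          unfolding sc_eq by (rule pfun_hom[OF that])
        show "x \<in> linf" by (rule x)
      qed
      then show ?thesis using that by blast
    qed
    have fadd: "f (\<lambda>n. y n + z n) = f y + f z" if "y \<in> linf" "z \<in> linf" for y z
      using f1 that unfolding plus_eq by blast
    have fsc: "f (\<lambda>n. r *\<^sub>R y n) = r * f y" if "y \<in> linf" for y r
      using f2 that unfolding sc_eq by blast
    have flin: "f (\<lambda>n. a *\<^sub>R y n + b *\<^sub>R w n) = a * f y + b * f w" if "y \<in> linf" "w \<in> linf" for y w a b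
      using fadd[OF linf_scaleR[OF that(1)] linf_scaleR[OF that(2)]] fsc that by simp
    have fsh: "f (lshift y) = f y" if y: "y \<in> linf" for y
    proof -
      have e1: "(\<lambda>n. lshift y n - y n) = (\<lambda>n. 1 *\<^sub>R lshift y n + (-1) *\<^sub>R y n)" by simp
      have e2: "(\<lambda>n. y n - lshift y n) = (\<lambda>n. 1 *\<^sub>R y n + (-1) *\<^sub>R lshift y n)" by simp
      have m1: "(\<lambda>n. lshift y n - y n) \<in> linf" unfolding e1
        by (rule linf_add[OF linf_scaleR[OF linf_lshift[OF y]] linf_scaleR[OF y]])
      have m2: "(\<lambda>n. y n - lshift y n) \<in> linf" unfolding e2
        by (rule linf_add[OF linf_scaleR[OF y] linf_scaleR[OF linf_lshift[OF y]]])
      have "f (\<lambda>n. lshift y n - y n) \<le> 0" using f3 m1 pfun_shift_diff(1)[OF y] by fastforce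
      moreover have "f (\<lambda>n. y n - lshift y n) \<le> 0" using f3 m2 pfun_shift_diff(2)[OF y] by fastforce
      moreover have "f (\<lambda>n. lshift y n - y n) = f (lshift y) - f y"
        unfolding e1 using flin[OF linf_lshift[OF y] y, of 1 "-1"] by simp
      moreover have "f (\<lambda>n. y n - lshift y n) = f y - f (lshift y)"
        unfolding e2 using flin[OF y linf_lshift[OF y], of 1 "-1"] by simp
      ultimately show ?thesis by simp
    qed
    define iy where "iy y = (\<lambda>n. sc \<i> (y n))" for y :: "nat \<Rightarrow> 'a"
    have iyl: "iy y \<in> linf" if "y \<in> linf" for y
      unfolding iy_def by (rule linf_normeq[OF that, of _ 1]) (simp_all add: P)
    define L where "L y = Complex (f y) (- f (iy y))" for y
    have decomp: "(\<lambda>n. sc c (y n)) = (\<lambda>n. Re c *\<^sub>R y n + Im c *\<^sub>R iy y n)" for c y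
      unfolding iy_def by (rule ext) (rule sc_decomp[OF assms(1)])
    have scl: "(\<lambda>n. sc c (y n)) \<in> linf" if "y \<in> linf" for c y
      unfolding decomp by (rule linf_add[OF linf_scaleR[OF that] linf_scaleR[OF iyl[OF that]]])
    have Lsc: "L (\<lambda>n. sc c (y n)) = c * L y" if y: "y \<in> linf" for c y
    proof -
      have a: "f (\<lambda>n. sc c (y n)) = Re c * f y + Im c * f (iy y)"
        unfolding decomp by (rule flin[OF y iyl[OF y]])
      have "iy (\<lambda>n. sc c (y n)) = (\<lambda>n. sc (\<i> * c) (y n))" unfolding iy_def by (simp add: P)
      also have "\<dots> = (\<lambda>n. (- Im c) *\<^sub>R y n + Re c *\<^sub>R iy y n)" unfolding decomp by simp
      finally have b: "f (iy (\<lambda>n. sc c (y n))) = (- Im c) * f y + Re c * f (iy y)"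
        using flin[OF y iyl[OF y], of "- Im c" "Re c"] by (simp only:)
      show ?thesis unfolding L_def a b by (simp add: complex_eq_iff algebra_simps)
    qed
    have BL: "banach_limit sc L"
      unfolding banach_limit_def
    proof (intro conjI ballI allI)
      fix y z :: "nat \<Rightarrow> 'a" assume y: "y \<in> linf" and z: "z \<in> linf"
      have "iy (\<lambda>n. y n + z n) = (\<lambda>n. iy y n + iy z n)" unfolding iy_def by (simp add: P)
      then show "L (\<lambda>n. y n + z n) = L y + L z"
        unfolding L_def using fadd[OF y z] fadd[OF iyl[OF y] iyl[OF z]] by (simp add: complex_eq_iff)
    next
      fix c and y :: "nat \<Rightarrow> 'a" assume y: "y \<in> linf"
      show "L (\<lambda>n. sc c (y n)) = c * L y" by (rule Lsc[OF y])
    next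
      fix y :: "nat \<Rightarrow> 'a" assume y: "y \<in> linf"
      show "cmod (L y) \<le> supnorm y"
      proof (cases "L y = 0")
        case True then show ?thesis using supnorm_nonneg[OF y] by simp
      next
        case False
        define c where "c = cnj (L y) / complex_of_real (cmod (L y))"
        have cm: "cmod c = 1" using False by (simp add: c_def norm_divide)
        have "c * L y = complex_of_real (cmod (L y))"
          using False by (simp add: c_def complex_norm_square[symmetric] power2_eq_square field_simps)
        then have "L (\<lambda>n. sc c (y n)) = complex_of_real (cmod (L y))" using Lsc[OF y] by simp
        then have "cmod (L y) = f (\<lambda>n. sc c (y n))" unfolding L_def by (simp add: complex_eq_iff)
        also have "\<dots> \<le> pfun (\<lambda>n. sc c (y n))" using f3 scl[OF y] by blast
        also have "\<dots> \<le> supnorm (\<lambda>n. sc c (y n))" by (rule pfun_le_supnorm[OF scl[OF y]])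
        also have "supnorm (\<lambda>n. sc c (y n)) = supnorm y" unfolding supnorm_def by (simp add: P cm)
        finally show ?thesis .
      qed
    next
      fix y :: "nat \<Rightarrow> 'a" assume y: "y \<in> linf"
      have "iy (lshift y) = lshift (iy y)" unfolding iy_def lshift_def by simp
      then show "L (lshift y) = L y" unfolding L_def using fsh[OF y] fsh[OF iyl[OF y]] by simp
    qed
    have "L x = 0" using H BL by blast
    then have "f x = 0" unfolding L_def by (simp add: complex_eq_iff)
    then show False using f4 ne by simp
  qed
qed

end
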